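(* In the MHAV setting described in the context, with $Y$, $f$, $\Lambda$ and $\phi_Y$ fixed, the set of paths of positive probability under $\bar P_{\mathrm{MH}}$ is the same for all parameter values $\alpha'\in(0,1)$ and $\alpha,\beta\in(0,1)$ with $\alpha+\beta<1$.
   Context: MHAV setting: $Y$ is a finite nonempty set, $f:Y\to\mathbb{R}$; $\Lambda=\{\lambda_1<\dots<\lambda_n\}$ positive reals, $n\ge2$; $\bar\Pi(\lambda,y)=\lambda^{-f(y)}/Z$ on $\Lambda\times Y$, $Z=\sum_{\lambda,y}\lambda^{-f(y)}$. $\phi_Y$ is an irreducible Markov kernel on $Y$. For $\alpha'\in(0,1)$: $\phi_\Lambda(\lambda_1,\lambda_2)=1$, $\phi_\Lambda(\lambda_n,\lambda_{n-1})=1$, and for $1<i<n$, $\phi_\Lambda(\lambda_i,\lambda_{i+1})=\alpha'$, $\phi_\Lambda(\lambda_i,\lambda_{i-1})=1-\alpha'$, other entries $0$. $\bar\phi[(\lambda,y),(\lambda',y')]=\alpha\phi_\Lambda(\lambda,\lambda')$ if $\lambda\ne\lambda',y=y'$; $\beta\phi_Y(y,y')$ if $\lambda=\lambda',y\ne y'$; $(1-\alpha-\beta)+\beta\phi_Y(y,y)$ if $(\lambda,y)=(\lambda',y')$; $0$ otherwise. $\bar{\mathsf{Acc}}(x,x')=\min\{1,\frac{\bar\phi(x',x)\bar\Pi(x')}{\bar\phi(x,x')\bar\Pi(x)}\}$; $\bar P_{\mathrm{MH}}(x,x')=\bar\phi(x,x')\bar{\mathsf{Acc}}(x,x')$ for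 $x\ne x'$, $\bar P_{\mathrm{MH}}(x,x)=1-\sum_{x'\ne x}\bar P_{\mathrm{MH}}(x,x')$. A path is a finite sequence $x_0,x_1,\dots,x_m$ in $\Lambda\times Y$; its probability is $\prod_{i=0}^{m-1}\bar P_{\mathrm{MH}}(x_i,x_{i+1})$. *)

theory Defs
  imports Complex_Main
begin

text \<open>The temperature ladder is given by an index function lam with
  Lambda = lam ` {1..n}, lam 1 < ... < lam n.\<close>

definition Lam :: "(nat \<Rightarrow> real) \<Rightarrow> nat \<Rightarrow> real set" where
  "Lam lam n = lam ` {1..n}"

definition states :: "'y set \<Rightarrow> (nat \<Rightarrow> real) \<Rightarrow> nat \<Rightarrow> (real \<times> 'y) set" where
  "states Y lam n = Lam lam n \<times> Y"

definition irreducible_kernel :: "'y set \<Rightarrow> ('y \<Rightarrow> 'y \<Rightarrow> real) \<Rightarrow> bool" where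
  "irreducible_kernel Y phi \<longleftrightarrow>
     (\<forall>y\<in>Y. \<forall>y'\<in>Y. phi y y' \<ge> 0) \<and>
     (\<forall>y\<in>Y. (\<Sum>y'\<in>Y. phi y y') = 1) \<and>
     (\<forall>y\<in>Y. \<forall>y'\<in>Y. (y, y') \<in> {(u, v). u \<in> Y \<and> v \<in> Y \<and> phi u v > 0}\<^sup>*)"

definition phiLam :: "(nat \<Rightarrow> real) \<Rightarrow> nat \<Rightarrow> real \<Rightarrow> real \<Rightarrow> real \<Rightarrow> real" where
  "phiLam lam n alpha' a b =
     (if a = lam 1 \<and> b = lam 2 then 1
      else if a = lam n \<and> b = lam (n - 1) then 1
      else if (\<exists>i. 1 < i \<and> i < n \<and> a = lam i \<and> b = lam (i + 1)) then alpha'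
      else if (\<exists>i. 1 < i \<and> i < n \<and> a = lam i \<and> b = lam (i - 1)) then 1 - alpha'
      else 0)"

definition phiBar ::
  "(nat \<Rightarrow> real) \<Rightarrow> nat \<Rightarrow> ('y \<Rightarrow> 'y \<Rightarrow> real) \<Rightarrow> real \<Rightarrow> real \<Rightarrow> real
   \<Rightarrow> real \<times> 'y \<Rightarrow> real \<times> 'y \<Rightarrow> real" where
  "phiBar lam n phiY alpha' alpha beta x x' =
     (let (a, y) = x; (a', y') = x' in
      if a \<noteq> a' \<and> y = y' then alpha * phiLam lam n alpha' a a'
      else if a = a' \<and> y \<noteq> y' then beta * phiY y y'
      else if a = a' \<and> y = y' then (1 - alpha - beta) + beta * phiY y y
      else 0)"

definition Zc :: "'y set \<Rightarrow> ('y \<Rightarrow> real) \<Rightarrow> (nat \<Rightarrow> real) \<Rightarrow> nat \<Rightarrow> real" where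
  "Zc Y f lam n = (\<Sum>(a, y)\<in>states Y lam n. a powr (- f y))"

definition PiBar :: "'y set \<Rightarrow> ('y \<Rightarrow> real) \<Rightarrow> (nat \<Rightarrow> real) \<Rightarrow> nat \<Rightarrow> real \<times> 'y \<Rightarrow> real" where
  "PiBar Y f lam n x = (case x of (a, y) \<Rightarrow> a powr (- f y) / Zc Y f lam n)"

definition AccBar ::
  "'y set \<Rightarrow> ('y \<Rightarrow> real) \<Rightarrow> (nat \<Rightarrow> real) \<Rightarrow> nat \<Rightarrow> ('y \<Rightarrow> 'y \<Rightarrow> real) \<Rightarrow> real \<Rightarrow> real \<Rightarrow> real
   \<Rightarrow> real \<times> 'y \<Rightarrow> real \<times> 'y \<Rightarrow> real" where
  "AccBar Y f lam n phiY alpha' alpha beta x x' =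
     min 1 ((phiBar lam n phiY alpha' alpha beta x' x * PiBar Y f lam n x') /
            (phiBar lam n phiY alpha' alpha beta x x' * PiBar Y f lam n x))"

definition PMH ::
  "'y set \<Rightarrow> ('y \<Rightarrow> real) \<Rightarrow> (nat \<Rightarrow> real) \<Rightarrow> nat \<Rightarrow> ('y \<Rightarrow> 'y \<Rightarrow> real) \<Rightarrow> real \<Rightarrow> real \<Rightarrow> real
   \<Rightarrow> real \<times> 'y \<Rightarrow> real \<times> 'y \<Rightarrow> real" where
  "PMH Y f lam n phiY alpha' alpha beta x x' =
     (if x \<noteq> x' then phiBar lam n phiY alpha' alpha beta x x' * AccBar Y f lam n phiY alpha' alpha beta x x'
      else 1 - (\<Sum>z\<in>states Y lam n - {x}.
                  phiBar lam n phiY alpha' alpha beta x z * AccBar Y f lam n phiY alpha' alpha beta x z))"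

definition path_prob ::
  "'y set \<Rightarrow> ('y \<Rightarrow> real) \<Rightarrow> (nat \<Rightarrow> real) \<Rightarrow> nat \<Rightarrow> ('y \<Rightarrow> 'y \<Rightarrow> real) \<Rightarrow> real \<Rightarrow> real \<Rightarrow> real
   \<Rightarrow> (real \<times> 'y) list \<Rightarrow> real" where
  "path_prob Y f lam n phiY alpha' alpha beta xs =
     prod_list (map (\<lambda>(x, x'). PMH Y f lam n phiY alpha' alpha beta x x') (zip xs (tl xs)))"

definition pos_paths ::
  "'y set \<Rightarrow> ('y \<Rightarrow> real) \<Rightarrow> (nat \<Rightarrow> real) \<Rightarrow> nat \<Rightarrow> ('y \<Rightarrow> 'y \<Rightarrow> real) \<Rightarrow> real \<Rightarrow> real \<Rightarrow> real
   \<Rightarrow> (real \<times> 'y) list set" where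
  "pos_paths Y f lam n phiY alpha' alpha beta =
     {xs. xs \<noteq> [] \<and> set xs \<subseteq> states Y lam n \<and> path_prob Y f lam n phiY alpha' alpha beta xs > 0}"

definition valid_params :: "real \<Rightarrow> real \<Rightarrow> real \<Rightarrow> bool" where
  "valid_params alpha' alpha beta \<longleftrightarrow>
     0 < alpha' \<and> alpha' < 1 \<and> 0 < alpha \<and> alpha < 1 \<and> 0 < beta \<and> beta < 1 \<and> alpha + beta < 1"

end

theory Submission
  imports Defs
begin

definition Lrel :: "(nat \<Rightarrow> real) \<Rightarrow> nat \<Rightarrow> real \<Rightarrow> real \<Rightarrow> bool" where
  "Lrel lam n a b \<longleftrightarrow> (a = lam 1 \<and> b = lam 2) \<or> (a = lam n \<and> b = lam (n - 1)) \<or>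
     (\<exists>i. 1 < i \<and> i < n \<and> a = lam i \<and> b = lam (i + 1)) \<or>
     (\<exists>i. 1 < i \<and> i < n \<and> a = lam i \<and> b = lam (i - 1))"

lemma phiLam_nonneg: "0 \<le> al \<Longrightarrow> al \<le> 1 \<Longrightarrow> 0 \<le> phiLam lam n al a b"
  unfolding phiLam_def by auto

lemma phiLam_pos: "0 < al \<Longrightarrow> al < 1 \<Longrightarrow> (phiLam lam n al a b > 0 \<longleftrightarrow> Lrel lam n a b)"
  unfolding phiLam_def Lrel_def by auto

lemma sum_two_bound:
  fixes g :: "'a \<Rightarrow> real"
  assumes "finite S" "0 \<le> u" "0 \<le> v"
    and "\<And>b. b \<in> S \<Longrightarrow> g b \<le> (if b = c then u else 0) + (if b = d then v else 0)"
  shows "sum g S \<le> u + v"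
proof -
  have "sum g S \<le> (\<Sum>b\<in>S. (if b = c then u else 0) + (if b = d then v else 0))"
    by (rule sum_mono) (use assms in auto)
  also have "\<dots> = (if c \<in> S then u else 0) + (if d \<in> S then v else 0)"
    using assms(1) by (simp add: sum.distrib)
  also have "\<dots> \<le> u + v" using assms by auto
  finally show ?thesis .
qed

lemma phiLam_sum:
  assumes "n \<ge> 2" and mono: "\<forall>i\<in>{1..n}. \<forall>j\<in>{1..n}. i < j \<longrightarrow> lam i < lam j"
    and "a \<in> Lam lam n" and "0 \<le> al" "al \<le> 1"
  shows "sum (phiLam lam n al a) (Lam lam n - {a}) \<le> 1"
proof -
  have inj: "\<And>i j. i \<in> {1..n} \<Longrightarrow> j \<in> {1..n} \<Longrightarrow> lam i = lam j \<Longrightarrow> i = j"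
    using mono by (metis linorder_neqE_nat order_less_irrefl)
  obtain i where i: "i \<in> {1..n}" "a = lam i" using assms(3) unfolding Lam_def by auto
  have fin: "finite (Lam lam n - {a})" unfolding Lam_def by auto
  show ?thesis
  proof (cases "i = 1")
    case True
    have "sum (phiLam lam n al a) (Lam lam n - {a}) \<le> 1 + 0"
    proof (rule sum_two_bound[OF fin, where c = "lam 2" and d = "lam 2"])
      fix b assume "b \<in> Lam lam n - {a}"
      have "\<not> (a = lam n)" using True i inj[of 1 n] assms(1) by auto
      moreover have "a \<noteq> lam j" if "1 < j" "j < n" for j using that True i inj[of 1 j] by auto
      ultimately show "phiLam lam n al a b \<le> (if b = lam 2 then 1 else 0) + (if b = lam 2 then 0 else 0)"
        unfolding phiLam_def using True i by auto
    qed auto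
    then show ?thesis by simp
  next
    case False
    show ?thesis
    proof (cases "i = n")
      case True
      have "sum (phiLam lam n al a) (Lam lam n - {a}) \<le> 1 + 0"
      proof (rule sum_two_bound[OF fin, where c = "lam (n - 1)" and d = "lam (n - 1)"])
        fix b assume "b \<in> Lam lam n - {a}"
        have "\<not> (a = lam 1)" using True i inj[of 1 n] assms(1) by auto
        moreover have "a \<noteq> lam j" if "1 < j" "j < n" for j using that True i inj[of n j] by auto
        ultimately show "phiLam lam n al a b \<le> (if b = lam (n - 1) then 1 else 0) + (if b = lam (n - 1) then 0 else 0)"
          unfolding phiLam_def using True i by auto
      qed auto
      then show ?thesis by simp
    next
      case False2: False
      have i1: "1 < i" "i < n" using i False False2 by auto
      have "sum (phiLam lam n al a) (Lam lam n - {a}) \<le> al + (1 - al)"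
      proof (rule sum_two_bound[OF fin, where c = "lam (i + 1)" and d = "lam (i - 1)"])
        fix b assume "b \<in> Lam lam n - {a}"
        have "\<not> (a = lam 1)" using i1 i inj[of 1 i] by auto
        moreover have "\<not> (a = lam n)" using i1 i inj[of n i] by auto
        moreover have "j = i" if "1 < j" "j < n" "a = lam j" for j using that i1 i inj[of j i] by auto
        ultimately show "phiLam lam n al a b \<le> (if b = lam (i + 1) then al else 0) + (if b = lam (i - 1) then 1 - al else 0)"
          unfolding phiLam_def using i1 i assms(4,5) by auto
      qed (use assms in auto)
      then show ?thesis by simp
    qed
  qed
qed


lemma phiBar_pair: "phiBar lam n phiY al' al be (a, y) (a', y') =
  (if a \<noteq> a' \<and> y = y' then al * phiLam lam n al' a a'
   else if a = a' \<and> y \<noteq> y' then be * phiY y y'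
   else if a = a' \<and> y = y' then (1 - al - be) + be * phiY y y else 0)"
  unfolding phiBar_def by simp

definition Rrel :: "(nat \<Rightarrow> real) \<Rightarrow> nat \<Rightarrow> ('y \<Rightarrow> 'y \<Rightarrow> real) \<Rightarrow> real \<times> 'y \<Rightarrow> real \<times> 'y \<Rightarrow> bool" where
  "Rrel lam n phiY x x' \<longleftrightarrow> (case x of (a, y) \<Rightarrow> case x' of (a', y') \<Rightarrow>
     (a \<noteq> a' \<and> y = y' \<and> Lrel lam n a a') \<or> (a = a' \<and> y \<noteq> y' \<and> phiY y y' > 0))"

lemma phiBar_nonneg:
  assumes "valid_params al' al be" "irreducible_kernel Y phiY" "snd x \<in> Y" "snd x' \<in> Y"
  shows "0 \<le> phiBar lam n phiY al' al be x x'"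
proof -
  obtain a y a' y' where xx: "x = (a, y)" "x' = (a', y')" by (cases x, cases x')
  have py: "0 \<le> phiY y y'" "0 \<le> phiY y y" using assms(2-4) xx unfolding irreducible_kernel_def by auto
  have pl: "0 \<le> phiLam lam n al' a a'" using assms(1) by (intro phiLam_nonneg) (auto simp: valid_params_def)
  show ?thesis using py pl assms(1) unfolding xx phiBar_pair valid_params_def by auto
qed

lemma phiBar_pos:
  assumes "valid_params al' al be" "x \<noteq> x'"
  shows "0 < phiBar lam n phiY al' al be x x' \<longleftrightarrow> Rrel lam n phiY x x'"
proof -
  obtain a y a' y' where xx: "x = (a, y)" "x' = (a', y')" by (cases x, cases x')
  have pl: "0 < phiLam lam n al' a a' \<longleftrightarrow> Lrel lam n a a'" using assms(1)
    by (intro phiLam_pos) (auto simp: valid_params_def)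
  have "0 < al" "0 < be" using assms(1) by (auto simp: valid_params_def)
  then show ?thesis using pl assms(2) unfolding xx phiBar_pair Rrel_def
    by (auto simp: zero_less_mult_iff)
qed

lemma Zc_pos:
  assumes "finite Y" "Y \<noteq> {}" "n \<ge> 2" "\<forall>i\<in>{1..n}. lam i > 0"
  shows "0 < Zc Y f lam n"
proof -
  have fin: "finite (states Y lam n)" using assms(1) unfolding states_def Lam_def by auto
  have ne: "states Y lam n \<noteq> {}" using assms(2,3) unfolding states_def Lam_def by auto
  have "\<forall>x\<in>states Y lam n. 0 < (case x of (a, y) \<Rightarrow> a powr (- f y))"
    using assms(4) unfolding states_def Lam_def by auto
  then show ?thesis unfolding Zc_def using sum_pos[OF fin ne] by blast
qed

lemma PiBar_pos:
  assumes "finite Y" "Y \<noteq> {}" "n \<ge> 2" "\<forall>i\<in>{1..n}. lam i > 0" "x \<in> states Y lam n"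
  shows "0 < PiBar Y f lam n x"
proof -
  obtain a y where xx: "x = (a, y)" by (cases x)
  have "a > 0" using assms(4,5) xx unfolding states_def Lam_def by auto
  then show ?thesis using Zc_pos[OF assms(1-4), of f] unfolding xx PiBar_def by simp
qed

lemma PMH_off:
  assumes fY: "finite Y" "Y \<noteq> {}" "n \<ge> 2" "\<forall>i\<in>{1..n}. lam i > 0"
    and vp: "valid_params al' al be" and irr: "irreducible_kernel Y phiY"
    and xs: "x \<in> states Y lam n" "x' \<in> states Y lam n" and ne: "x \<noteq> x'"
  shows "0 \<le> PMH Y f lam n phiY al' al be x x' \<and>
         (0 < PMH Y f lam n phiY al' al be x x' \<longleftrightarrow> Rrel lam n phiY x x' \<and> Rrel lam n phiY x' x)"
proof -
  have sy: "snd x \<in> Y" "snd x' \<in> Y" using xs unfolding states_def by auto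
  define p where "p = phiBar lam n phiY al' al be x x'"
  define q where "q = phiBar lam n phiY al' al be x' x"
  define P where "P = PiBar Y f lam n x"
  define P' where "P' = PiBar Y f lam n x'"
  have p0: "0 \<le> p" unfolding p_def by (rule phiBar_nonneg[OF vp irr sy])
  have q0: "0 \<le> q" unfolding q_def by (rule phiBar_nonneg[OF vp irr sy(2,1)])
  have P0: "0 < P" "0 < P'" unfolding P_def P'_def using PiBar_pos[OF fY] xs by auto
  have pe: "0 < p \<longleftrightarrow> Rrel lam n phiY x x'" unfolding p_def by (rule phiBar_pos[OF vp ne])
  have qe: "0 < q \<longleftrightarrow> Rrel lam n phiY x' x" unfolding q_def using ne by (intro phiBar_pos[OF vp]) auto
  have PMH: "PMH Y f lam n phiY al' al be x x' = p * min 1 ((q * P') / (p * P))"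
    unfolding PMH_def AccBar_def p_def q_def P_def P'_def using ne by simp
  have r0: "0 \<le> (q * P') / (p * P)" using p0 q0 P0 by simp
  have "0 \<le> p * min 1 ((q * P') / (p * P))" using p0 r0 by simp
  moreover have "0 < p * min 1 ((q * P') / (p * P)) \<longleftrightarrow> 0 < p \<and> 0 < q"
  proof
    assume h: "0 < p * min 1 ((q * P') / (p * P))"
    then have "p \<noteq> 0" by auto
    with p0 have pp: "0 < p" by simp
    have "q \<noteq> 0" using h by auto
    with q0 pp show "0 < p \<and> 0 < q" by simp
  next
    assume "0 < p \<and> 0 < q"
    then have "0 < (q * P') / (p * P)" using P0 by simp
    then show "0 < p * min 1 ((q * P') / (p * P))" using \<open>0 < p \<and> 0 < q\<close> by simp
  qed
  ultimately show ?thesis using pe qe PMH by simp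
qed

lemma PMH_diag:
  assumes fY: "finite Y" "Y \<noteq> {}" "n \<ge> 2" "\<forall>i\<in>{1..n}. lam i > 0"
    and mono: "\<forall>i\<in>{1..n}. \<forall>j\<in>{1..n}. i < j \<longrightarrow> lam i < lam j"
    and vp: "valid_params al' al be" and irr: "irreducible_kernel Y phiY"
    and xs: "x \<in> states Y lam n"
  shows "0 < PMH Y f lam n phiY al' al be x x"
proof -
  obtain a y where xx: "x = (a, y)" by (cases x)
  have aL: "a \<in> Lam lam n" and yY: "y \<in> Y" using xs xx unfolding states_def by auto
  let ?S = "states Y lam n - {x}"
  let ?g = "\<lambda>z. phiBar lam n phiY al' al be x z"
  have finS: "finite (states Y lam n)" using fY(1) unfolding states_def Lam_def by auto
  have "(\<Sum>z\<in>?S. ?g z * AccBar Y f lam n phiY al' al be x z) \<le> (\<Sum>z\<in>?S. ?g z)"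
  proof (rule sum_mono)
    fix z assume z: "z \<in> ?S"
    have "0 \<le> ?g z" using z xs unfolding states_def by (intro phiBar_nonneg[OF vp irr]) auto
    moreover have "AccBar Y f lam n phiY al' al be x z \<le> 1" unfolding AccBar_def by simp
    ultimately show "?g z * AccBar Y f lam n phiY al' al be x z \<le> ?g z"
      by (simp add: mult_left_le)
  qed
  also have "(\<Sum>z\<in>?S. ?g z) = (\<Sum>z\<in>(\<lambda>a'. (a', y)) ` (Lam lam n - {a}) \<union> Pair a ` (Y - {y}). ?g z)"
  proof (rule sum.mono_neutral_right)
    show "finite ?S" using finS by simp
    show "(\<lambda>a'. (a', y)) ` (Lam lam n - {a}) \<union> Pair a ` (Y - {y}) \<subseteq> ?S"
      using aL yY xx unfolding states_def by auto
    show "\<forall>z\<in>?S - ((\<lambda>a'. (a', y)) ` (Lam lam n - {a}) \<union> Pair a ` (Y - {y})). ?g z = 0"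
    proof
      fix z assume z: "z \<in> ?S - ((\<lambda>a'. (a', y)) ` (Lam lam n - {a}) \<union> Pair a ` (Y - {y}))"
      obtain a' y' where zz: "z = (a', y')" by (cases z)
      have "\<not> (a \<noteq> a' \<and> y = y')" "\<not> (a = a' \<and> y \<noteq> y')" "\<not> (a = a' \<and> y = y')"
        using z zz xx unfolding states_def by auto
      then show "?g z = 0" unfolding xx zz phiBar_pair by simp
    qed
  qed
  also have "\<dots> = (\<Sum>z\<in>(\<lambda>a'. (a', y)) ` (Lam lam n - {a}). ?g z) + (\<Sum>z\<in>Pair a ` (Y - {y}). ?g z)"
    by (rule sum.union_disjoint) (use fY(1) in \<open>auto simp: Lam_def\<close>)
  also have "(\<Sum>z\<in>(\<lambda>a'. (a', y)) ` (Lam lam n - {a}). ?g z) = (\<Sum>a'\<in>Lam lam n - {a}. al * phiLam lam n al' a a')"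
    by (subst sum.reindex) (auto simp: inj_on_def xx phiBar_pair intro!: sum.cong)
  also have "(\<Sum>z\<in>Pair a ` (Y - {y}). ?g z) = (\<Sum>y'\<in>Y - {y}. be * phiY y y')"
  proof -
    have "inj_on (Pair a) (Y - {y})" by (auto simp: inj_on_def)
    then have "(\<Sum>z\<in>Pair a ` (Y - {y}). ?g z) = (\<Sum>y'\<in>Y - {y}. ?g (a, y'))"
      by (simp add: sum.reindex)
    also have "\<dots> = (\<Sum>y'\<in>Y - {y}. be * phiY y y')"
      by (rule sum.cong) (auto simp: xx phiBar_pair)
    finally show ?thesis .
  qed
  finally have bound: "(\<Sum>z\<in>?S. ?g z * AccBar Y f lam n phiY al' al be x z)
     \<le> al * (\<Sum>a'\<in>Lam lam n - {a}. phiLam lam n al' a a') + be * (\<Sum>y'\<in>Y - {y}. phiY y y')"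
    by (simp add: sum_distrib_left)
  have vpp: "0 < al'" "al' < 1" "0 < al" "0 < be" "al + be < 1" using vp by (auto simp: valid_params_def)
  have s1: "(\<Sum>a'\<in>Lam lam n - {a}. phiLam lam n al' a a') \<le> 1"
    using phiLam_sum[OF fY(3) mono aL] vpp by auto
  have s2: "(\<Sum>y'\<in>Y - {y}. phiY y y') \<le> 1"
  proof -
    have "(\<Sum>y'\<in>Y. phiY y y') = 1" "0 \<le> phiY y y" using irr yY unfolding irreducible_kernel_def by auto
    moreover have "(\<Sum>y'\<in>Y. phiY y y') = phiY y y + (\<Sum>y'\<in>Y - {y}. phiY y y')"
      using fY(1) yY by (simp add: sum.remove)
    ultimately show ?thesis by simp
  qed
  have "al * (\<Sum>a'\<in>Lam lam n - {a}. phiLam lam n al' a a') \<le> al * 1"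
    using s1 vpp by (intro mult_left_mono) auto
  moreover have "be * (\<Sum>y'\<in>Y - {y}. phiY y y') \<le> be * 1"
    using s2 vpp by (intro mult_left_mono) auto
  ultimately have "(\<Sum>z\<in>?S. ?g z * AccBar Y f lam n phiY al' al be x z) < 1"
    using bound vpp by linarith
  then show ?thesis unfolding PMH_def by simp
qed


fun okp :: "(real \<times> 'y \<Rightarrow> real \<times> 'y \<Rightarrow> bool) \<Rightarrow> (real \<times> 'y) list \<Rightarrow> bool" where
  "okp E (x # y # xs) = (E x y \<and> okp E (y # xs))"
| "okp E _ = True"

lemma path_prob_cons2: "path_prob Y f lam n phiY al' al be (x # y # xs) =
   PMH Y f lam n phiY al' al be x y * path_prob Y f lam n phiY al' al be (y # xs)"
  unfolding path_prob_def by simp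

lemma path_prob_single: "path_prob Y f lam n phiY al' al be [x] = 1"
  unfolding path_prob_def by simp

lemma path_prob_char:
  assumes fY: "finite Y" "Y \<noteq> {}" "n \<ge> 2" "\<forall>i\<in>{1..n}. lam i > 0"
    and mono: "\<forall>i\<in>{1..n}. \<forall>j\<in>{1..n}. i < j \<longrightarrow> lam i < lam j"
    and vp: "valid_params al' al be" and irr: "irreducible_kernel Y phiY"
  shows "xs \<noteq> [] \<Longrightarrow> set xs \<subseteq> states Y lam n \<Longrightarrow>
     0 \<le> path_prob Y f lam n phiY al' al be xs \<and>
     (0 < path_prob Y f lam n phiY al' al be xs \<longleftrightarrow>
        okp (\<lambda>x x'. x = x' \<or> (Rrel lam n phiY x x' \<and> Rrel lam n phiY x' x)) xs)"
proof (induction xs rule: induct_list012)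
  case 1 then show ?case by simp
next
  case (2 x) then show ?case by (simp add: path_prob_single)
next
  case (3 x y zs)
  have xs: "x \<in> states Y lam n" "y \<in> states Y lam n" using 3(4) by auto
  have IH: "0 \<le> path_prob Y f lam n phiY al' al be (y # zs) \<and>
     (0 < path_prob Y f lam n phiY al' al be (y # zs) \<longleftrightarrow>
        okp (\<lambda>x x'. x = x' \<or> (Rrel lam n phiY x x' \<and> Rrel lam n phiY x' x)) (y # zs))"
    using 3(2,4) by simp
  have E: "0 \<le> PMH Y f lam n phiY al' al be x y \<and>
     (0 < PMH Y f lam n phiY al' al be x y \<longleftrightarrow> x = y \<or> (Rrel lam n phiY x y \<and> Rrel lam n phiY y x))"
  proof (cases "x = y")
    case True
    have "0 < PMH Y f lam n phiY al' al be x x" by (rule PMH_diag[OF fY mono vp irr xs(1)])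
    then show ?thesis using True by simp
  next
    case False
    then show ?thesis using PMH_off[OF fY vp irr xs False] by simp
  qed
  show ?case unfolding path_prob_cons2 okp.simps
    using E IH by (auto simp: zero_less_mult_iff)
qed

theorem corollary18:
  fixes Y :: "'y set" and f :: "'y \<Rightarrow> real" and lam :: "nat \<Rightarrow> real" and n :: nat
    and phiY :: "'y \<Rightarrow> 'y \<Rightarrow> real"
    and a1' a1 b1 a2' a2 b2 :: real
  assumes "finite Y" and "Y \<noteq> {}"
    and "n \<ge> 2"
    and "\<forall>i\<in>{1..n}. lam i > 0"
    and "\<forall>i\<in>{1..n}. \<forall>j\<in>{1..n}. i < j \<longrightarrow> lam i < lam j"
    and "irreducible_kernel Y phiY"
    and "valid_params a1' a1 b1"
    and "valid_params a2' a2 b2"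
  shows "pos_paths Y f lam n phiY a1' a1 b1 = pos_paths Y f lam n phiY a2' a2 b2"
  unfolding pos_paths_def
  using path_prob_char[OF assms(1-5) assms(7) assms(6)] path_prob_char[OF assms(1-5) assms(8) assms(6)]
  by blast

end
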